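(* Let $m\ge1$, $\alpha>0$, let $A$ be a finite set of bilinear maps $\Phi:\mathbb{R}^m\times\mathbb{R}^m\to\mathbb{R}^m$ each of whose coordinates is a bilinear form with nonnegative coefficients, and let $\mathbf v\in\mathbb{R}_{\ge0}^m$. Let $F\subseteq\mathbb{R}^m\times\mathbb{N}$ be the smallest set such that $(\mathbf v,1)\in F$ and, whenever $(\mathbf w,i),(\mathbf u,j)\in F$ and $\Phi\in A$, also $(\Phi(\mathbf w,\mathbf u),i+j)\in F$. Suppose there is a bounded set $X\subseteq\mathbb{R}_{\ge0}^m$ such that $\frac{1}{\alpha}\mathbf v\in\operatorname{conv}_\le(X)$ and, for all $\mathbf x,\mathbf x'\in X$ and all $\Phi\in A$, $\Phi(\mathbf x,\mathbf x')\in\operatorname{conv}_\le(X)$. Then for every $\mathbf p\in\mathbb{R}_{\ge0}^m$ and every integer $n$, $$\max\{|\mathbf p\cdot\mathbf u| : (\mathbf u,n)\in F\}\le \alpha^n\max_{\mathbf x\in X}|\mathbf p\cdot\mathbf x| .$$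
   Context: For vectors $\mathbf x,\mathbf x'\in\mathbb{R}^m$, $\mathbf x\le\mathbf x'$ means coordinatewise inequality. For $X\subseteq\mathbb{R}_{\ge0}^m$, $\operatorname{conv}(X)$ is the convex hull of $X$ and $\operatorname{conv}_\le(X)=\{\mathbf x\in\mathbb{R}_{\ge0}^m:\ \exists\,\mathbf x'\in\operatorname{conv}(X),\ \mathbf x\le \mathbf x'\}$. *)

theory Defs
  imports "HOL-Analysis.Analysis"
begin

definition nonneg_orthant :: "(real ^ 'm) set" where
  "nonneg_orthant = {x. \<forall>i. 0 \<le> x $ i}"

definition conv_le :: "(real ^ 'm) set \<Rightarrow> (real ^ 'm) set" where
  "conv_le X = {x \<in> nonneg_orthant. \<exists>x' \<in> convex hull X. \<forall>i. x $ i \<le> x' $ i}"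

definition nonneg_bilinear :: "(real ^ 'm \<Rightarrow> real ^ 'm \<Rightarrow> real ^ 'm) \<Rightarrow> bool" where
  "nonneg_bilinear \<Phi> \<longleftrightarrow>
     (\<exists>c :: 'm \<Rightarrow> 'm \<Rightarrow> 'm \<Rightarrow> real. (\<forall>i j k. 0 \<le> c i j k) \<and>
        (\<forall>x y i. \<Phi> x y $ i = (\<Sum>j\<in>UNIV. \<Sum>k\<in>UNIV. c i j k * x $ j * y $ k)))"

inductive_set genF :: "(real ^ 'm \<Rightarrow> real ^ 'm \<Rightarrow> real ^ 'm) set \<Rightarrow> real ^ 'm
                       \<Rightarrow> ((real ^ 'm) \<times> nat) set"
  for A :: "(real ^ 'm \<Rightarrow> real ^ 'm \<Rightarrow> real ^ 'm) set" and v :: "real ^ 'm" where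
  base: "(v, 1) \<in> genF A v"
| step: "(w, i) \<in> genF A v \<Longrightarrow> (u, j) \<in> genF A v \<Longrightarrow> \<Phi> \<in> A
          \<Longrightarrow> (\<Phi> w u, i + j) \<in> genF A v"

end

theory Submission
  imports Defs
begin

lemma nb_left:
  assumes "nonneg_bilinear \<Phi>"
  shows "\<Phi> (a *\<^sub>R x + b *\<^sub>R x2) y = a *\<^sub>R \<Phi> x y + b *\<^sub>R \<Phi> x2 y"
proof -
  obtain c where c: "\<forall>x y i. \<Phi> x y $ i = (\<Sum>j\<in>UNIV. \<Sum>k\<in>UNIV. c i j k * x $ j * y $ k)"
    using assms unfolding nonneg_bilinear_def by blast
  show ?thesis
    by (simp add: vec_eq_iff c sum_distrib_left sum.distrib[symmetric] algebra_simps)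
qed

lemma nb_right:
  assumes "nonneg_bilinear \<Phi>"
  shows "\<Phi> y (a *\<^sub>R x + b *\<^sub>R x2) = a *\<^sub>R \<Phi> y x + b *\<^sub>R \<Phi> y x2"
proof -
  obtain c where c: "\<forall>x y i. \<Phi> x y $ i = (\<Sum>j\<in>UNIV. \<Sum>k\<in>UNIV. c i j k * x $ j * y $ k)"
    using assms unfolding nonneg_bilinear_def by blast
  show ?thesis
    by (simp add: vec_eq_iff c sum_distrib_left sum.distrib[symmetric] algebra_simps)
qed

lemma nb_scale:
  assumes "nonneg_bilinear \<Phi>"
  shows "\<Phi> (a *\<^sub>R x) (b *\<^sub>R y) = (a * b) *\<^sub>R \<Phi> x y"
proof -
  obtain c where c: "\<forall>x y i. \<Phi> x y $ i = (\<Sum>j\<in>UNIV. \<Sum>k\<in>UNIV. c i j k * x $ j * y $ k)"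
    using assms unfolding nonneg_bilinear_def by blast
  show ?thesis
    by (simp add: vec_eq_iff c sum_distrib_left algebra_simps)
qed

lemma nb_mono:
  assumes "nonneg_bilinear \<Phi>"
    and "\<forall>i. 0 \<le> a $ i \<and> a $ i \<le> a' $ i" "\<forall>i. 0 \<le> b $ i \<and> b $ i \<le> b' $ i"
  shows "0 \<le> \<Phi> a b $ i \<and> \<Phi> a b $ i \<le> \<Phi> a' b' $ i"
proof -
  obtain c where c0: "\<forall>i j k. 0 \<le> c i j k" and
    c: "\<forall>x y i. \<Phi> x y $ i = (\<Sum>j\<in>UNIV. \<Sum>k\<in>UNIV. c i j k * x $ j * y $ k)"
    using assms unfolding nonneg_bilinear_def by blast
  have "0 \<le> \<Phi> a b $ i" 
    using c0 assms(2,3) by (simp add: c sum_nonneg)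
  moreover have "\<Phi> a b $ i \<le> \<Phi> a' b' $ i" unfolding c[rule_format]
  proof (intro sum_mono)
    fix j k
    show "c i j k * a $ j * b $ k \<le> c i j k * a' $ j * b' $ k"
    proof -
      have "0 \<le> a' $ j" "0 \<le> b $ k" "a $ j \<le> a' $ j" "b $ k \<le> b' $ k" "0 \<le> c i j k"
        using assms(2,3) c0 by (auto intro: order_trans)
      then show ?thesis by (intro mult_mono mult_left_mono) auto
    qed
  qed
  ultimately show ?thesis by blast
qed

definition D :: "(real ^ 'm) set \<Rightarrow> (real ^ 'm) set" where
  "D X = {z. \<exists>z'\<in>convex hull X. \<forall>i. z $ i \<le> z' $ i}"

lemma convex_D: "convex (D X)"
proof (rule convexI)
  fix x y and u v :: real
  assume "x \<in> D X" "y \<in> D X" and h0: "0 \<le> u" "0 \<le> v" "u + v = 1"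
  then obtain x' y' where h1: "x' \<in> convex hull X" "\<forall>i. x $ i \<le> x' $ i"
    "y' \<in> convex hull X" "\<forall>i. y $ i \<le> y' $ i" unfolding D_def by blast
  note h = h0 h1
  show "u *\<^sub>R x + v *\<^sub>R y \<in> D X" unfolding D_def mem_Collect_eq
  proof (intro bexI[of _ "u *\<^sub>R x' + v *\<^sub>R y'"] allI)
    show "u *\<^sub>R x' + v *\<^sub>R y' \<in> convex hull X"
      using h convex_convex_hull[of X] unfolding convex_def by blast
    fix i show "(u *\<^sub>R x + v *\<^sub>R y) $ i \<le> (u *\<^sub>R x' + v *\<^sub>R y') $ i"
      using h by (simp add: add_mono mult_left_mono)
  qed
qed

lemma convex_preimage_lin:
  assumes "\<And>a b x y. f (a *\<^sub>R x + b *\<^sub>R y) = a *\<^sub>R f x + b *\<^sub>R f y" "convex S"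
  shows "convex {x. f x \<in> S}"
  using assms unfolding convex_def by auto

lemma hull_closed:
  assumes "nonneg_bilinear \<Phi>" "\<forall>x\<in>X. \<forall>x'\<in>X. \<Phi> x x' \<in> D X"
    and "a \<in> convex hull X" "b \<in> convex hull X"
  shows "\<Phi> a b \<in> D X"
proof -
  have 1: "\<Phi> x b \<in> D X" if "x \<in> X" for x
  proof -
    have "convex {y. \<Phi> x y \<in> D X}"
      by (rule convex_preimage_lin[OF nb_right[OF assms(1)] convex_D])
    moreover have "X \<subseteq> {y. \<Phi> x y \<in> D X}" using assms(2) that by auto
    ultimately have "convex hull X \<subseteq> {y. \<Phi> x y \<in> D X}" by (rule hull_minimal[rotated])
    then show ?thesis using assms(4) by auto
  qed
  have "convex {x. \<Phi> x b \<in> D X}"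
    by (rule convex_preimage_lin[OF nb_left[OF assms(1)] convex_D])
  moreover have "X \<subseteq> {x. \<Phi> x b \<in> D X}" using 1 by auto
  ultimately have "convex hull X \<subseteq> {x. \<Phi> x b \<in> D X}" by (rule hull_minimal[rotated])
  then show ?thesis using assms(3) by auto
qed

lemma conv_le_closed:
  assumes "nonneg_bilinear \<Phi>" "\<forall>x\<in>X. \<forall>x'\<in>X. \<Phi> x x' \<in> conv_le X"
    and "a \<in> conv_le X" "b \<in> conv_le X"
  shows "\<Phi> a b \<in> conv_le X"
proof -
  have X2: "\<forall>x\<in>X. \<forall>x'\<in>X. \<Phi> x x' \<in> D X"
    using assms(2) unfolding conv_le_def D_def by blast
  obtain a' where a': "a' \<in> convex hull X" "\<forall>i. a $ i \<le> a' $ i" "\<forall>i. 0 \<le> a $ i"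
    using assms(3) unfolding conv_le_def nonneg_orthant_def by blast
  obtain b' where b': "b' \<in> convex hull X" "\<forall>i. b $ i \<le> b' $ i" "\<forall>i. 0 \<le> b $ i"
    using assms(4) unfolding conv_le_def nonneg_orthant_def by blast
  have "\<Phi> a' b' \<in> D X" using hull_closed[OF assms(1) X2 a'(1) b'(1)] .
  then obtain z where z: "z \<in> convex hull X" "\<forall>i. \<Phi> a' b' $ i \<le> z $ i"
    unfolding D_def by blast
  have m: "\<And>i. 0 \<le> \<Phi> a b $ i \<and> \<Phi> a b $ i \<le> \<Phi> a' b' $ i"
    using nb_mono[OF assms(1)] a' b' by blast
  show ?thesis unfolding conv_le_def nonneg_orthant_def
    using m z by (auto intro: order_trans)
qed

theorem mainTheorem2:
  fixes A :: "(real ^ 'm \<Rightarrow> real ^ 'm \<Rightarrow> real ^ 'm) set"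
    and v :: "real ^ 'm" and \<alpha> :: real and X :: "(real ^ 'm) set"
  assumes "\<alpha> > 0"
    and "finite A"
    and "\<forall>\<Phi>\<in>A. nonneg_bilinear \<Phi>"
    and "v \<in> nonneg_orthant"
    and "bounded X" and "X \<subseteq> nonneg_orthant"
    and "(1 / \<alpha>) *\<^sub>R v \<in> conv_le X"
    and "\<forall>x\<in>X. \<forall>x'\<in>X. \<forall>\<Phi>\<in>A. \<Phi> x x' \<in> conv_le X"
  shows "\<forall>p \<in> nonneg_orthant. \<forall>n u. (u, n) \<in> genF A v \<longrightarrow>
           \<bar>p \<bullet> u\<bar> \<le> \<alpha> ^ n * (SUP x\<in>X. \<bar>p \<bullet> x\<bar>)"
proof (intro ballI allI impI)
  fix p :: "real^'m" and n u
  assume p: "p \<in> nonneg_orthant" and un: "(u, n) \<in> genF A v"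
  have inv: "(1 / \<alpha> ^ n) *\<^sub>R u \<in> conv_le X" using un
  proof (induction rule: genF.induct)
    case base then show ?case using assms(7) by simp
  next
    case (step w i u j \<Phi>)
    have nb: "nonneg_bilinear \<Phi>" using assms(3) step by blast
    have "(1 / \<alpha> ^ (i + j)) *\<^sub>R \<Phi> w u = \<Phi> ((1 / \<alpha> ^ i) *\<^sub>R w) ((1 / \<alpha> ^ j) *\<^sub>R u)"
      by (simp add: nb_scale[OF nb] power_add)
    also have "\<dots> \<in> conv_le X"
      by (rule conv_le_closed[OF nb _ step.IH]) (use assms(8) step in blast)
    finally show ?case .
  qed
  define c where "c = (1 / \<alpha> ^ n) *\<^sub>R u"
  have uc: "u = \<alpha> ^ n *\<^sub>R c" using assms(1) by (simp add: c_def)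
  obtain c' where c': "c' \<in> convex hull X" "\<forall>i. c $ i \<le> c' $ i" "\<forall>i. 0 \<le> c $ i"
    using inv unfolding c_def[symmetric] conv_le_def nonneg_orthant_def by blast
  have p0: "\<forall>i. 0 \<le> p $ i" using p unfolding nonneg_orthant_def by blast
  have Xne: "X \<noteq> {}" using assms(7) unfolding conv_le_def by auto
  have absX: "\<bar>p \<bullet> x\<bar> = p \<bullet> x" if "x \<in> X" for x
  proof -
    have "\<forall>i. 0 \<le> x $ i" using that assms(6) unfolding nonneg_orthant_def by blast
    then have "0 \<le> p \<bullet> x" unfolding inner_vec_def using p0 by (auto intro!: sum_nonneg)
    then show ?thesis by simp
  qed
  obtain B where B: "\<forall>x\<in>X. norm x \<le> B" using assms(5) unfolding bounded_iff by blast
  have bdd: "bdd_above ((\<lambda>x. \<bar>p \<bullet> x\<bar>) ` X)"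
  proof (rule bdd_aboveI2)
    fix x assume "x \<in> X"
    then show "\<bar>p \<bullet> x\<bar> \<le> norm p * B"
      using B Cauchy_Schwarz_ineq2[of p x] by (meson mult_left_mono norm_ge_zero order_trans)
  qed
  define S where "S = (SUP x\<in>X. \<bar>p \<bullet> x\<bar>)"
  have "convex {y. p \<bullet> y \<le> S}" by (rule convex_halfspace_le)
  moreover have "X \<subseteq> {y. p \<bullet> y \<le> S}"
    using absX bdd unfolding S_def by (auto intro: cSUP_upper2)
  ultimately have "convex hull X \<subseteq> {y. p \<bullet> y \<le> S}" by (rule hull_minimal[rotated])
  then have c'S: "p \<bullet> c' \<le> S" using c'(1) by auto
  have pc0: "0 \<le> p \<bullet> c" unfolding inner_vec_def using p0 c' by (auto intro!: sum_nonneg)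
  have "p \<bullet> c \<le> p \<bullet> c'" unfolding inner_vec_def using p0 c'
    by (auto intro!: sum_mono mult_left_mono)
  then have pcS: "p \<bullet> c \<le> S" using c'S by linarith
  have "\<bar>p \<bullet> u\<bar> = \<alpha> ^ n * (p \<bullet> c)" using uc pc0 assms(1) by simp
  also have "\<dots> \<le> \<alpha> ^ n * S" using pcS assms(1) by (simp add: mult_left_mono)
  finally show "\<bar>p \<bullet> u\<bar> \<le> \<alpha> ^ n * (SUP x\<in>X. \<bar>p \<bullet> x\<bar>)" unfolding S_def .
qed

end
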